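(* Let $\alpha\in(0,1)$, $R>1$, and $\varphi(t)=\min\{1,(R-|t|)^+\}$. For $\varepsilon>0$ let $u_\varepsilon(t)=\varepsilon^2\sin(t/\varepsilon^2)\,\varphi(t)$ and define, for $y\in\mathbb R$, $$ G_\varepsilon(y)=\frac1\varepsilon\int_{\mathbb R}\rho_\varepsilon(x-y)\,\bigl(u_\varepsilon(x)-u_\varepsilon(y)\bigr)\frac{x-y}{|x-y|}\,dx,\qquad \rho_\varepsilon(\xi)=\frac1\varepsilon\Bigl|\frac\xi\varepsilon\Bigr|^{-1-\alpha}. $$ Then there is a constant $C=C(\alpha,R)$ such that $\int_{\mathbb R}|G_\varepsilon(y)|^2\,dy\le C\,\varepsilon^{1-\alpha}$ for all $\varepsilon\in(0,1)$, so $\int_{\mathbb R}|G_\varepsilon|^2\,dy\to0$ as $\varepsilon\to0$, while $\liminf_{\varepsilon\to0}\|u_\varepsilon'\|^2_{L^2(\mathbb R)}>0$. Consequently there is no constant $c>0$ such that $\int_{\mathbb R}|G_\varepsilon|^2\,dy\ge c\,\|u_\varepsilon'\|^2_{L^2(\mathbb R)}$ for all small $\varepsilon$.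
   Context: The integral defining $G_\varepsilon(y)$ converges absolutely since $u_\varepsilon$ is bounded and Lipschitz and $\alpha<1$. The quantity $\int_{\mathbb R}|G_\varepsilon|^2dy$ is the quadratic energy $\int_{\mathbb R}|\nabla_{\rho_\varepsilon}u_\varepsilon|^2$ for the scaled (and normalized by $1/\varepsilon$) nonlocal gradient with Riesz kernel $\rho(\xi)=|\xi|^{-1-\alpha}$. *)

theory Defs
  imports "HOL-Analysis.Analysis"
begin

definition cutoff :: "real \<Rightarrow> real \<Rightarrow> real" where
  "cutoff R t = min 1 (max 0 (R - \<bar>t\<bar>))"

definition u_eps :: "real \<Rightarrow> real \<Rightarrow> real \<Rightarrow> real" where
  "u_eps R \<epsilon> t = \<epsilon>\<^sup>2 * sin (t / \<epsilon>\<^sup>2) * cutoff R t"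

definition rho_eps :: "real \<Rightarrow> real \<Rightarrow> real \<Rightarrow> real" where
  "rho_eps \<alpha> \<epsilon> \<xi> = (1 / \<epsilon>) * (\<bar>\<xi> / \<epsilon>\<bar>) powr (-1 - \<alpha>)"

text \<open>Integrand of G_eps(y), as a function of x. (x-y)/|x-y| = sgn(x-y).\<close>
definition G_integrand :: "real \<Rightarrow> real \<Rightarrow> real \<Rightarrow> real \<Rightarrow> real \<Rightarrow> real" where
  "G_integrand \<alpha> R \<epsilon> y x =
     rho_eps \<alpha> \<epsilon> (x - y) * (u_eps R \<epsilon> x - u_eps R \<epsilon> y) * sgn (x - y)"

definition G_eps :: "real \<Rightarrow> real \<Rightarrow> real \<Rightarrow> real \<Rightarrow> real" where
  "G_eps \<alpha> R \<epsilon> y = (1 / \<epsilon>) * (\<integral>x. G_integrand \<alpha> R \<epsilon> y x \<partial>lborel)"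

definition G_energy :: "real \<Rightarrow> real \<Rightarrow> real \<Rightarrow> ennreal" where
  "G_energy \<alpha> R \<epsilon> = (\<integral>\<^sup>+ y. ennreal ((G_eps \<alpha> R \<epsilon> y)\<^sup>2) \<partial>lborel)"

definition deriv_energy :: "real \<Rightarrow> real \<Rightarrow> ennreal" where
  "deriv_energy R \<epsilon> = (\<integral>\<^sup>+ t. ennreal ((deriv (u_eps R \<epsilon>) t)\<^sup>2) \<partial>lborel)"

end

theory Submission
  imports Defs
begin

lemma nn_sym:
  fixes g :: "real \<Rightarrow> real"
  assumes [measurable]: "g \<in> borel_measurable borel"
  shows "(\<integral>\<^sup>+x. ennreal (g \<bar>x\<bar>) \<partial>lborel) \<le> 2 * (\<integral>\<^sup>+x. ennreal (g x) * indicator {0..} x \<partial>lborel)"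
proof -
  define h where "h = (\<lambda>x. ennreal (g x) * indicator {0..} x)"
  have [measurable]: "h \<in> borel_measurable borel" unfolding h_def by measurable
  have "(\<integral>\<^sup>+x. ennreal (g \<bar>x\<bar>) \<partial>lborel) \<le> (\<integral>\<^sup>+x. h x + h (0 + (-1) * x) \<partial>lborel)"
  proof (rule nn_integral_mono)
    fix x :: real
    show "ennreal (g \<bar>x\<bar>) \<le> h x + h (0 + (-1) * x)"
      unfolding h_def by (cases "x \<ge> 0") (auto simp: indicator_def)
  qed
  also have "\<dots> = (\<integral>\<^sup>+x. h x \<partial>lborel) + (\<integral>\<^sup>+x. h (0 + (-1) * x) \<partial>lborel)"
    by (rule nn_integral_add) measurable
  also have "(\<integral>\<^sup>+x. h (0 + (-1) * x) \<partial>lborel) = (\<integral>\<^sup>+x. h x \<partial>lborel)"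
    using nn_integral_real_affine[of h "-1" 0] by simp
  finally show ?thesis unfolding h_def by (simp add: mult_2)
qed

lemma nn_powr_01:
  assumes "0 < a" "a < 1"
  shows "(\<integral>\<^sup>+x. ennreal (x powr (-a)) * indicator {0..1} x \<partial>lborel) = ennreal (1/(1-a))"
proof -
  have "((\<lambda>x::real. x powr (-a)) has_integral (1 powr (-a+1) / (-a+1))) {0..1}"
    by (rule has_integral_powr_from_0) (use assms in auto)
  then have hI: "((\<lambda>x::real. x powr (-a)) has_integral (1/(1-a))) {0..1}" by simp
  show ?thesis by (rule nn_integral_has_integral_lebesgue'[OF _ hI]) auto
qed

lemma nn_powr_1inf:
  assumes "1 < b"
  shows "(\<integral>\<^sup>+x. ennreal (x powr (-b)) * indicator {1..} x \<partial>lborel) = ennreal (1/(b-1))"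
proof -
  have "((\<lambda>x::real. x powr (-b)) has_integral (-(1 powr (-b+1)) / (-b+1))) {1..}"
    by (rule has_integral_powr_to_inf) (use assms in auto)
  then have hI: "((\<lambda>x::real. x powr (-b)) has_integral (1/(b-1))) {1..}"
  proof -
    have "-(1 powr (-b+1)) / (-b+1) = 1/(b-1)" using assms by (simp add: field_simps)
    then show ?thesis using \<open>((\<lambda>x::real. x powr (-b)) has_integral (-(1 powr (-b+1)) / (-b+1))) {1..}\<close> by simp
  qed
  show ?thesis by (rule nn_integral_has_integral_lebesgue'[OF _ hI]) auto
qed

lemma J_bound:
  assumes "0 < \<alpha>" "\<alpha> < 1"
  shows "(\<integral>\<^sup>+s. ennreal (\<bar>s\<bar> powr (-1-\<alpha>) * min \<bar>s\<bar> 1) \<partial>lborel) \<le> 2 * (ennreal (1/(1-\<alpha>)) + ennreal (1/\<alpha>))"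
proof -
  define g where "g = (\<lambda>s::real. s powr (-1-\<alpha>) * min s 1)"
  have [measurable]: "g \<in> borel_measurable borel" unfolding g_def by measurable
  have "(\<integral>\<^sup>+s. ennreal (\<bar>s\<bar> powr (-1-\<alpha>) * min \<bar>s\<bar> 1) \<partial>lborel) = (\<integral>\<^sup>+s. ennreal (g \<bar>s\<bar>) \<partial>lborel)"
    unfolding g_def by simp
  also have "\<dots> \<le> 2 * (\<integral>\<^sup>+x. ennreal (g x) * indicator {0..} x \<partial>lborel)" by (rule nn_sym) measurable
  also have "(\<integral>\<^sup>+x. ennreal (g x) * indicator {0..} x \<partial>lborel) \<le>
     (\<integral>\<^sup>+x. ennreal (x powr (-\<alpha>)) * indicator {0..1} x + ennreal (x powr (-(1+\<alpha>))) * indicator {1..} x \<partial>lborel)"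
  proof (rule nn_integral_mono)
    fix x :: real
    show "ennreal (g x) * indicator {0..} x \<le> ennreal (x powr (-\<alpha>)) * indicator {0..1} x + ennreal (x powr (-(1+\<alpha>))) * indicator {1..} x"
    proof (cases "x \<le> 0")
      case True then show ?thesis by (auto simp: indicator_def g_def)
    next
      case False
      show ?thesis
      proof (cases "x \<le> 1")
        case True
        have "g x = x * x powr (-1-\<alpha>)" using True False by (simp add: g_def)
        also have "\<dots> = x powr (-\<alpha>)" using False by (simp add: powr_mult_base)
        finally show ?thesis using True False by (auto simp: indicator_def)
      next
        case False2: False
        then show ?thesis using False by (auto simp: indicator_def g_def)
      qed
    qed
  qed
  also have "\<dots> = (\<integral>\<^sup>+x. ennreal (x powr (-\<alpha>)) * indicator {0..1} x \<partial>lborel) + (\<integral>\<^sup>+x. ennreal (x powr (-(1+\<alpha>))) * indicator {1..} x \<partial>lborel)"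
    by (rule nn_integral_add) measurable
  also have "\<dots> = ennreal (1/(1-\<alpha>)) + ennreal (1/((1+\<alpha>)-1))"
    using nn_powr_01[OF assms] nn_powr_1inf[of "1+\<alpha>"] assms by simp
  finally show ?thesis by (simp add: mult_left_mono)
qed

lemma T_bound:
  "(\<integral>\<^sup>+y. ennreal (if 1 \<le> \<bar>y\<bar> then \<bar>y\<bar> powr (-2) else 0) \<partial>lborel) \<le> 2"
proof -
  define g where "g = (\<lambda>s::real. if 1 \<le> s then s powr (-2) else 0)"
  have [measurable]: "g \<in> borel_measurable borel" unfolding g_def by measurable
  have "(\<integral>\<^sup>+y. ennreal (if 1 \<le> \<bar>y\<bar> then \<bar>y\<bar> powr (-2) else 0) \<partial>lborel) = (\<integral>\<^sup>+s. ennreal (g \<bar>s\<bar>) \<partial>lborel)"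
    unfolding g_def by simp
  also have "\<dots> \<le> 2 * (\<integral>\<^sup>+x. ennreal (g x) * indicator {0..} x \<partial>lborel)" by (rule nn_sym) measurable
  also have "(\<integral>\<^sup>+x. ennreal (g x) * indicator {0..} x \<partial>lborel) = (\<integral>\<^sup>+x. ennreal (x powr (-2)) * indicator {1..} x \<partial>lborel)"
    by (rule nn_integral_cong) (auto simp: g_def indicator_def)
  also have "\<dots> = 1" using nn_powr_1inf[of 2] by simp
  finally show ?thesis by simp
qed
lemma sin_lip: "\<bar>sin a - sin b\<bar> \<le> \<bar>a - b\<bar>" for a b :: real
proof -
  have h1: "\<bar>sin ((a - b) / 2)\<bar> \<le> \<bar>(a - b) / 2\<bar>" by (rule abs_sin_x_le_abs_x)
  have h2: "\<bar>cos ((a + b) / 2)\<bar> \<le> 1" by simp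
  have "\<bar>sin a - sin b\<bar> = 2 * (\<bar>sin ((a - b) / 2)\<bar> * \<bar>cos ((a + b) / 2)\<bar>)"
    by (simp add: sin_diff_sin abs_mult)
  also have "\<dots> \<le> 2 * (\<bar>(a - b) / 2\<bar> * 1)"
    using h1 h2 by (intro mult_left_mono mult_mono) auto
  finally show ?thesis by simp
qed

lemma cutoff_nonneg: "0 \<le> cutoff R t" by (simp add: cutoff_def)
lemma cutoff_le1: "cutoff R t \<le> 1" by (simp add: cutoff_def)
lemma cutoff_lip: "\<bar>cutoff R x - cutoff R y\<bar> \<le> \<bar>x - y\<bar>"
  unfolding cutoff_def by (auto simp: min_def max_def abs_if)
lemma cutoff_out: "R \<le> \<bar>t\<bar> \<Longrightarrow> cutoff R t = 0" by (simp add: cutoff_def)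

lemma u_bound: "\<bar>u_eps R \<epsilon> t\<bar> \<le> \<epsilon>\<^sup>2"
proof -
  have "\<bar>u_eps R \<epsilon> t\<bar> = \<epsilon>\<^sup>2 * \<bar>sin (t / \<epsilon>\<^sup>2)\<bar> * cutoff R t"
    by (simp add: u_eps_def abs_mult cutoff_nonneg)
  also have "\<dots> \<le> \<epsilon>\<^sup>2 * 1 * 1"
    by (intro mult_mono) (auto simp: cutoff_le1 cutoff_nonneg)
  finally show ?thesis by simp
qed

lemma u_out: "R \<le> \<bar>t\<bar> \<Longrightarrow> u_eps R \<epsilon> t = 0" by (simp add: u_eps_def cutoff_out)

lemma u_lip:
  assumes "\<epsilon> > 0"
  shows "\<bar>u_eps R \<epsilon> x - u_eps R \<epsilon> y\<bar> \<le> (1 + \<epsilon>\<^sup>2) * \<bar>x - y\<bar>"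
proof -
  have e: "\<epsilon>\<^sup>2 > 0" using assms by simp
  have "u_eps R \<epsilon> x - u_eps R \<epsilon> y =
      \<epsilon>\<^sup>2 * (sin (x / \<epsilon>\<^sup>2) - sin (y / \<epsilon>\<^sup>2)) * cutoff R x + \<epsilon>\<^sup>2 * sin (y / \<epsilon>\<^sup>2) * (cutoff R x - cutoff R y)"
    by (simp add: u_eps_def algebra_simps)
  also have "\<bar>\<dots>\<bar> \<le> \<epsilon>\<^sup>2 * \<bar>sin (x / \<epsilon>\<^sup>2) - sin (y / \<epsilon>\<^sup>2)\<bar> * cutoff R x + \<epsilon>\<^sup>2 * \<bar>sin (y / \<epsilon>\<^sup>2)\<bar> * \<bar>cutoff R x - cutoff R y\<bar>"
    by (rule order_trans[OF abs_triangle_ineq]) (simp add: abs_mult abs_of_nonneg[OF cutoff_nonneg])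
  also have "\<dots> \<le> \<epsilon>\<^sup>2 * \<bar>x / \<epsilon>\<^sup>2 - y / \<epsilon>\<^sup>2\<bar> * 1 + \<epsilon>\<^sup>2 * 1 * \<bar>x - y\<bar>"
    by (intro add_mono mult_mono sin_lip cutoff_lip) (auto simp: cutoff_le1 cutoff_nonneg)
  also have "\<epsilon>\<^sup>2 * \<bar>x / \<epsilon>\<^sup>2 - y / \<epsilon>\<^sup>2\<bar> = \<bar>x - y\<bar>"
    using e by (simp add: diff_divide_distrib[symmetric] abs_div)
  finally show ?thesis by (simp add: algebra_simps)
qed

lemma rho_nonneg: "\<epsilon> > 0 \<Longrightarrow> 0 \<le> rho_eps \<alpha> \<epsilon> h" by (simp add: rho_eps_def)

lemma Gint_near:
  assumes "\<epsilon> > 0"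
  shows "\<bar>G_integrand \<alpha> R \<epsilon> y x\<bar> \<le> rho_eps \<alpha> \<epsilon> (x - y) * min ((1 + \<epsilon>\<^sup>2) * \<bar>x - y\<bar>) (2 * \<epsilon>\<^sup>2)"
proof -
  have d: "\<bar>u_eps R \<epsilon> x - u_eps R \<epsilon> y\<bar> \<le> min ((1 + \<epsilon>\<^sup>2) * \<bar>x - y\<bar>) (2 * \<epsilon>\<^sup>2)"
    using u_lip[OF assms, of R x y] u_bound[of R \<epsilon> x] u_bound[of R \<epsilon> y] by auto
  have "\<bar>G_integrand \<alpha> R \<epsilon> y x\<bar> = rho_eps \<alpha> \<epsilon> (x - y) * \<bar>u_eps R \<epsilon> x - u_eps R \<epsilon> y\<bar> * \<bar>sgn (x - y)\<bar>"
    by (simp add: G_integrand_def abs_mult rho_nonneg[OF assms])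
  also have "\<dots> \<le> rho_eps \<alpha> \<epsilon> (x - y) * min ((1 + \<epsilon>\<^sup>2) * \<bar>x - y\<bar>) (2 * \<epsilon>\<^sup>2) * 1"
    by (intro mult_mono d mult_left_mono) (auto simp: rho_nonneg[OF assms] abs_sgn_eq)
  finally show ?thesis by simp
qed

lemma Gint_far:
  assumes "\<epsilon> > 0" "\<epsilon> < 1" "R > 1" "2 * R \<le> \<bar>y\<bar>" "0 < \<alpha>"
  shows "\<bar>G_integrand \<alpha> R \<epsilon> y x\<bar> \<le> (2 * \<epsilon>\<^sup>2 / \<bar>y\<bar>) * indicator {-R..R} x"
proof (cases "\<bar>x\<bar> \<le> R")
  case False
  have "u_eps R \<epsilon> x = 0" "u_eps R \<epsilon> y = 0" using False assms by (auto intro: u_out)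
  then show ?thesis by (simp add: G_integrand_def)
next
  case True
  have uy: "u_eps R \<epsilon> y = 0" using assms by (auto intro: u_out)
  have "\<bar>x + (y - x)\<bar> \<le> \<bar>x\<bar> + \<bar>y - x\<bar>" by (rule abs_triangle_ineq)
  then have "\<bar>y\<bar> \<le> \<bar>x\<bar> + \<bar>x - y\<bar>" by (simp add: abs_minus_commute)
  then have xy: "\<bar>x - y\<bar> \<ge> \<bar>y\<bar> / 2" "\<bar>x - y\<bar> \<ge> 1" using True assms by auto
  have b1: "1 \<le> \<bar>(x - y) / \<epsilon>\<bar>" using xy assms by (simp add: abs_div)
  have "rho_eps \<alpha> \<epsilon> (x - y) \<le> (1 / \<epsilon>) * \<bar>(x - y) / \<epsilon>\<bar> powr (-1)"
    unfolding rho_eps_def using assms b1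
    by (intro mult_left_mono powr_mono) auto
  also have "\<dots> = 1 / \<bar>x - y\<bar>" using assms by (simp add: powr_minus_divide abs_div)
  also have "\<dots> \<le> 2 / \<bar>y\<bar>"
  proof -
    have "\<bar>y\<bar> > 0" "\<bar>x - y\<bar> > 0" using assms xy by auto
    then show ?thesis using xy by (simp add: divide_simps)
  qed
  finally have r: "rho_eps \<alpha> \<epsilon> (x - y) \<le> 2 / \<bar>y\<bar>" .
  have "\<bar>G_integrand \<alpha> R \<epsilon> y x\<bar> = rho_eps \<alpha> \<epsilon> (x - y) * \<bar>u_eps R \<epsilon> x\<bar> * \<bar>sgn (x - y)\<bar>"
    by (simp add: G_integrand_def abs_mult rho_nonneg[OF assms(1)] uy)
  also have "\<dots> \<le> (2 / \<bar>y\<bar>) * \<epsilon>\<^sup>2 * 1"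
    by (intro mult_mono r u_bound) (auto simp: rho_nonneg[OF assms(1)] abs_sgn_eq)
  moreover have "x \<in> {-R..R}" using True by auto
  ultimately show ?thesis by simp
qed

lemma k_scale:
  assumes "\<epsilon> > 0" "L \<ge> 0"
  shows "\<epsilon>\<^sup>2 * (rho_eps \<alpha> \<epsilon> (\<epsilon>\<^sup>2 * s) * min (L * \<bar>\<epsilon>\<^sup>2 * s\<bar>) (2 * \<epsilon>\<^sup>2))
     \<le> \<epsilon> powr (2 - \<alpha>) * (L + 2) * (\<bar>s\<bar> powr (-1-\<alpha>) * min \<bar>s\<bar> 1)"
proof (cases "s = 0")
  case True then show ?thesis by (simp add: rho_eps_def)
next
  case False
  have r: "rho_eps \<alpha> \<epsilon> (\<epsilon>\<^sup>2 * s) = (1/\<epsilon>) * \<epsilon> powr (-1-\<alpha>) * \<bar>s\<bar> powr (-1-\<alpha>)"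
  proof -
    have "\<bar>\<epsilon>\<^sup>2 * s / \<epsilon>\<bar> = \<epsilon> * \<bar>s\<bar>" using assms by (simp add: power2_eq_square abs_mult)
    then show ?thesis using assms by (simp add: rho_eps_def powr_mult)
  qed
  have m: "min (L * \<bar>\<epsilon>\<^sup>2 * s\<bar>) (2 * \<epsilon>\<^sup>2) = \<epsilon>\<^sup>2 * min (L * \<bar>s\<bar>) 2"
    using assms by (simp add: abs_mult min_mult_distrib_left mult.commute mult.left_commute)
  have m2: "min (L * \<bar>s\<bar>) 2 \<le> (L + 2) * min \<bar>s\<bar> 1"
  proof (cases "\<bar>s\<bar> \<le> 1")
    case True
    have "min (L * \<bar>s\<bar>) 2 \<le> L * \<bar>s\<bar>" by simp
    also have "\<dots> \<le> (L + 2) * \<bar>s\<bar>" by (intro mult_right_mono) auto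
    finally show ?thesis using True by simp
  next
    case False
    have "min (L * \<bar>s\<bar>) 2 \<le> 2" by simp
    also have "\<dots> \<le> (L + 2)" using assms by simp
    finally show ?thesis using False by simp
  qed
  have e: "\<epsilon>\<^sup>2 * ((1/\<epsilon>) * \<epsilon> powr (-1-\<alpha>)) * \<epsilon>\<^sup>2 = \<epsilon> powr (2 - \<alpha>)"
  proof -
    have a1: "\<epsilon>\<^sup>2 = \<epsilon> powr 2" using assms by (simp add: powr_numeral)
    have a2: "1/\<epsilon> = \<epsilon> powr (-1)" using assms by (simp add: powr_minus_divide)
    have "\<epsilon> powr 2 * (\<epsilon> powr (-1) * \<epsilon> powr (-1-\<alpha>)) * \<epsilon> powr 2 = \<epsilon> powr (2 + (-1 + (-1-\<alpha>)) + 2)"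
      by (simp only: powr_add)
    then show ?thesis by (simp add: a1 a2)
  qed
  have "\<epsilon>\<^sup>2 * (rho_eps \<alpha> \<epsilon> (\<epsilon>\<^sup>2 * s) * min (L * \<bar>\<epsilon>\<^sup>2 * s\<bar>) (2 * \<epsilon>\<^sup>2))
     = (\<epsilon>\<^sup>2 * ((1/\<epsilon>) * \<epsilon> powr (-1-\<alpha>)) * \<epsilon>\<^sup>2) * (\<bar>s\<bar> powr (-1-\<alpha>) * min (L * \<bar>s\<bar>) 2)"
    unfolding r m by (simp only: mult_ac)
  also have "\<dots> = \<epsilon> powr (2 - \<alpha>) * (\<bar>s\<bar> powr (-1-\<alpha>) * min (L * \<bar>s\<bar>) 2)" by (simp only: e)
  also have "\<dots> \<le> \<epsilon> powr (2 - \<alpha>) * (\<bar>s\<bar> powr (-1-\<alpha>) * ((L + 2) * min \<bar>s\<bar> 1))"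
    by (intro mult_left_mono m2) auto
  finally show ?thesis by (simp add: algebra_simps)
qed
definition Jint :: "real \<Rightarrow> ennreal" where
  "Jint \<alpha> = (\<integral>\<^sup>+s. ennreal (\<bar>s\<bar> powr (-1-\<alpha>) * min \<bar>s\<bar> 1) \<partial>lborel)"

definition Jb :: "real \<Rightarrow> real" where "Jb \<alpha> = 2 * (1/(1-\<alpha>) + 1/\<alpha>)"

lemma Jint_le:
  assumes "0 < \<alpha>" "\<alpha> < 1"
  shows "Jint \<alpha> \<le> ennreal (Jb \<alpha>)"
proof -
  have "2 * (ennreal (1/(1-\<alpha>)) + ennreal (1/\<alpha>)) = ennreal (Jb \<alpha>)"
  proof -
    have a: "ennreal (1/(1-\<alpha>)) + ennreal (1/\<alpha>) = ennreal (1/(1-\<alpha>) + 1/\<alpha>)"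
      by (rule ennreal_plus[symmetric]) (use assms in auto)
    have b: "2 * ennreal (1/(1-\<alpha>) + 1/\<alpha>) = ennreal (2 * (1/(1-\<alpha>) + 1/\<alpha>))"
      by (subst ennreal_mult') simp_all
    show ?thesis unfolding Jb_def a b ..
  qed
  then show ?thesis using J_bound[OF assms] unfolding Jint_def by simp
qed

lemma inner_bound:
  assumes "\<epsilon> > 0" "0 < \<alpha>" "\<alpha> < 1"
  shows "(\<integral>\<^sup>+x. ennreal \<bar>G_integrand \<alpha> R \<epsilon> y x\<bar> \<partial>lborel) \<le> ennreal (\<epsilon> powr (2-\<alpha>) * (3+\<epsilon>\<^sup>2)) * Jint \<alpha>"
proof -
  define L where "L = 1 + \<epsilon>\<^sup>2"
  define k where "k = (\<lambda>h. rho_eps \<alpha> \<epsilon> h * min (L * \<bar>h\<bar>) (2 * \<epsilon>\<^sup>2))"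
  have [measurable]: "k \<in> borel_measurable borel" unfolding k_def rho_eps_def by measurable
  have e2: "\<epsilon>\<^sup>2 \<noteq> 0" using assms by simp
  have "(\<integral>\<^sup>+x. ennreal \<bar>G_integrand \<alpha> R \<epsilon> y x\<bar> \<partial>lborel) \<le> (\<integral>\<^sup>+x. ennreal (k (x - y)) \<partial>lborel)"
  proof (rule nn_integral_mono)
    fix x
    show "ennreal \<bar>G_integrand \<alpha> R \<epsilon> y x\<bar> \<le> ennreal (k (x - y))"
      unfolding k_def L_def by (rule ennreal_leI) (rule Gint_near[OF assms(1)])
  qed
  also have "\<dots> = ennreal \<bar>\<epsilon>\<^sup>2\<bar> * (\<integral>\<^sup>+s. ennreal (k (y + \<epsilon>\<^sup>2 * s - y)) \<partial>lborel)"
    by (rule nn_integral_real_affine[OF _ e2]) measurable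
  also have "\<dots> = (\<integral>\<^sup>+s. ennreal (\<epsilon>\<^sup>2 * k (\<epsilon>\<^sup>2 * s)) \<partial>lborel)"
    by (subst nn_integral_cmult[symmetric]) (auto simp: ennreal_mult')
  also have "\<dots> \<le> (\<integral>\<^sup>+s. ennreal (\<epsilon> powr (2-\<alpha>) * (3+\<epsilon>\<^sup>2)) * ennreal (\<bar>s\<bar> powr (-1-\<alpha>) * min \<bar>s\<bar> 1) \<partial>lborel)"
  proof (intro nn_integral_mono)
    fix s :: real
    have "\<epsilon>\<^sup>2 * k (\<epsilon>\<^sup>2 * s) \<le> \<epsilon> powr (2 - \<alpha>) * (L + 2) * (\<bar>s\<bar> powr (-1-\<alpha>) * min \<bar>s\<bar> 1)"
      unfolding k_def by (rule k_scale) (use assms in \<open>auto simp: L_def\<close>)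
    also have "\<dots> = \<epsilon> powr (2 - \<alpha>) * (3+\<epsilon>\<^sup>2) * (\<bar>s\<bar> powr (-1-\<alpha>) * min \<bar>s\<bar> 1)"
      unfolding L_def by simp
    finally have "ennreal (\<epsilon>\<^sup>2 * k (\<epsilon>\<^sup>2 * s)) \<le> ennreal (\<epsilon> powr (2 - \<alpha>) * (3+\<epsilon>\<^sup>2) * (\<bar>s\<bar> powr (-1-\<alpha>) * min \<bar>s\<bar> 1))"
      by (rule ennreal_leI)
    also have "\<dots> = ennreal (\<epsilon> powr (2-\<alpha>) * (3+\<epsilon>\<^sup>2)) * ennreal (\<bar>s\<bar> powr (-1-\<alpha>) * min \<bar>s\<bar> 1)"
      by (rule ennreal_mult') simp
    finally show "ennreal (\<epsilon>\<^sup>2 * k (\<epsilon>\<^sup>2 * s)) \<le> ennreal (\<epsilon> powr (2-\<alpha>) * (3+\<epsilon>\<^sup>2)) * ennreal (\<bar>s\<bar> powr (-1-\<alpha>) * min \<bar>s\<bar> 1)" .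
  qed
  also have "\<dots> = ennreal (\<epsilon> powr (2-\<alpha>) * (3+\<epsilon>\<^sup>2)) * Jint \<alpha>"
    unfolding Jint_def by (rule nn_integral_cmult) measurable
  finally show ?thesis .
qed

lemma Gint_integrable:
  assumes "\<epsilon> > 0" "0 < \<alpha>" "\<alpha> < 1"
  shows "integrable lborel (G_integrand \<alpha> R \<epsilon> y)"
proof (rule integrableI_bounded)
  show "G_integrand \<alpha> R \<epsilon> y \<in> borel_measurable lborel"
    unfolding G_integrand_def rho_eps_def u_eps_def cutoff_def by measurable
  have "(\<integral>\<^sup>+x. ennreal (norm (G_integrand \<alpha> R \<epsilon> y x)) \<partial>lborel) \<le> ennreal (\<epsilon> powr (2-\<alpha>) * (3+\<epsilon>\<^sup>2)) * ennreal (Jb \<alpha>)"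
  proof -
    have "(\<integral>\<^sup>+x. ennreal (norm (G_integrand \<alpha> R \<epsilon> y x)) \<partial>lborel) \<le> ennreal (\<epsilon> powr (2-\<alpha>) * (3+\<epsilon>\<^sup>2)) * Jint \<alpha>"
      unfolding real_norm_def by (rule inner_bound[OF assms])
    also have "\<dots> \<le> ennreal (\<epsilon> powr (2-\<alpha>) * (3+\<epsilon>\<^sup>2)) * ennreal (Jb \<alpha>)"
      by (rule mult_left_mono[OF Jint_le[OF assms(2,3)]]) simp
    finally show ?thesis .
  qed
  also have "\<dots> < \<infinity>" by (simp add: ennreal_mult_less_top)
  finally show "(\<integral>\<^sup>+x. ennreal (norm (G_integrand \<alpha> R \<epsilon> y x)) \<partial>lborel) < \<infinity>" .
qed

lemma abs_integral_le:
  assumes "integrable lborel f"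
  shows "ennreal \<bar>integral\<^sup>L lborel f\<bar> \<le> (\<integral>\<^sup>+x. ennreal \<bar>f x :: real\<bar> \<partial>lborel)"
  using integral_norm_bound_ennreal[OF assms] by (simp only: real_norm_def)

lemma G_near:
  assumes "\<epsilon> > 0" "0 < \<alpha>" "\<alpha> < 1"
  shows "\<bar>G_eps \<alpha> R \<epsilon> y\<bar> \<le> \<epsilon> powr (1-\<alpha>) * (3+\<epsilon>\<^sup>2) * Jb \<alpha>"
proof -
  let ?I = "integral\<^sup>L lborel (G_integrand \<alpha> R \<epsilon> y)"
  have "ennreal \<bar>?I\<bar> \<le> ennreal (\<epsilon> powr (2-\<alpha>) * (3+\<epsilon>\<^sup>2)) * ennreal (Jb \<alpha>)"
    using abs_integral_le[OF Gint_integrable[OF assms]] inner_bound[OF assms, of R y] Jint_le[OF assms(2,3)]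
  proof -
    have "(\<integral>\<^sup>+x. ennreal \<bar>G_integrand \<alpha> R \<epsilon> y x\<bar> \<partial>lborel) \<le> ennreal (\<epsilon> powr (2-\<alpha>) * (3+\<epsilon>\<^sup>2)) * Jint \<alpha>"
      by (rule inner_bound[OF assms])
    also have "\<dots> \<le> ennreal (\<epsilon> powr (2-\<alpha>) * (3+\<epsilon>\<^sup>2)) * ennreal (Jb \<alpha>)"
      by (rule mult_left_mono[OF Jint_le[OF assms(2,3)]]) simp
    finally show ?thesis by (rule order_trans[OF abs_integral_le[OF Gint_integrable[OF assms]]])
  qed
  also have "\<dots> = ennreal (\<epsilon> powr (2-\<alpha>) * (3+\<epsilon>\<^sup>2) * Jb \<alpha>)"
    by (rule ennreal_mult'[symmetric]) simp
  finally have "\<bar>?I\<bar> \<le> \<epsilon> powr (2-\<alpha>) * (3+\<epsilon>\<^sup>2) * Jb \<alpha>"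
    by (subst (asm) ennreal_le_iff) (use assms in \<open>auto simp: Jb_def\<close>)
  then have "(1/\<epsilon>) * \<bar>?I\<bar> \<le> (1/\<epsilon>) * (\<epsilon> powr (2-\<alpha>) * (3+\<epsilon>\<^sup>2) * Jb \<alpha>)"
    using assms by (intro mult_left_mono) auto
  also have "(1/\<epsilon>) * (\<epsilon> powr (2-\<alpha>) * (3+\<epsilon>\<^sup>2) * Jb \<alpha>) = \<epsilon> powr (1-\<alpha>) * (3+\<epsilon>\<^sup>2) * Jb \<alpha>"
  proof -
    have "\<epsilon> powr (1-\<alpha>) = \<epsilon> powr ((2-\<alpha>) - 1)" by simp
    also have "\<dots> = \<epsilon> powr (2-\<alpha>) / \<epsilon> powr 1" by (rule powr_diff)
    finally have "\<epsilon> powr (1-\<alpha>) = \<epsilon> powr (2-\<alpha>) / \<epsilon> powr 1" .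
    then show ?thesis using assms by simp
  qed
  finally show ?thesis using assms by (simp add: G_eps_def abs_mult)
qed

lemma G_far:
  assumes "\<epsilon> > 0" "\<epsilon> < 1" "R > 1" "2 * R \<le> \<bar>y\<bar>" "0 < \<alpha>" "\<alpha> < 1"
  shows "\<bar>G_eps \<alpha> R \<epsilon> y\<bar> \<le> 4 * R * \<epsilon> / \<bar>y\<bar>"
proof -
  let ?I = "integral\<^sup>L lborel (G_integrand \<alpha> R \<epsilon> y)"
  have yp: "\<bar>y\<bar> > 0" using assms by linarith
  have "ennreal \<bar>?I\<bar> \<le> (\<integral>\<^sup>+x. ennreal \<bar>G_integrand \<alpha> R \<epsilon> y x\<bar> \<partial>lborel)"
    by (rule abs_integral_le[OF Gint_integrable]) (use assms in auto)
  also have "\<dots> \<le> (\<integral>\<^sup>+x. ennreal (2 * \<epsilon>\<^sup>2 / \<bar>y\<bar>) * indicator {-R..R} x \<partial>lborel)"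
  proof (rule nn_integral_mono)
    fix x
    have "ennreal \<bar>G_integrand \<alpha> R \<epsilon> y x\<bar> \<le> ennreal (2 * \<epsilon>\<^sup>2 / \<bar>y\<bar> * indicator {-R..R} x)"
      by (rule ennreal_leI) (rule Gint_far[OF assms(1-5)])
    also have "\<dots> = ennreal (2 * \<epsilon>\<^sup>2 / \<bar>y\<bar>) * indicator {-R..R} x"
      by (simp add: indicator_def)
    finally show "ennreal \<bar>G_integrand \<alpha> R \<epsilon> y x\<bar> \<le> ennreal (2 * \<epsilon>\<^sup>2 / \<bar>y\<bar>) * indicator {-R..R} x" .
  qed
  also have "\<dots> = ennreal (2 * \<epsilon>\<^sup>2 / \<bar>y\<bar>) * ennreal (2 * R)"
    using assms by (simp add: nn_integral_cmult_indicator)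
  also have "\<dots> = ennreal (4 * R * \<epsilon>\<^sup>2 / \<bar>y\<bar>)"
    using assms yp by (simp add: ennreal_mult[symmetric])
  finally have "\<bar>?I\<bar> \<le> 4 * R * \<epsilon>\<^sup>2 / \<bar>y\<bar>"
    by (subst (asm) ennreal_le_iff) (use assms yp in auto)
  then have "(1/\<epsilon>) * \<bar>?I\<bar> \<le> (1/\<epsilon>) * (4 * R * \<epsilon>\<^sup>2 / \<bar>y\<bar>)"
    using assms by (intro mult_left_mono) auto
  also have "(1/\<epsilon>) * (4 * R * \<epsilon>\<^sup>2 / \<bar>y\<bar>) = 4 * R * \<epsilon> / \<bar>y\<bar>"
    using assms by (simp add: power2_eq_square)
  finally show ?thesis using assms by (simp add: G_eps_def abs_mult)
qed
definition Cst :: "real \<Rightarrow> real \<Rightarrow> real" where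
  "Cst \<alpha> R = (4 * Jb \<alpha>)\<^sup>2 * (4 * R) + 32 * R\<^sup>2"

lemma Jb_pos: "0 < \<alpha> \<Longrightarrow> \<alpha> < 1 \<Longrightarrow> 0 < Jb \<alpha>"
proof -
  assume a: "0 < \<alpha>" "\<alpha> < 1"
  have "0 < 1/(1-\<alpha>)" "0 < 1/\<alpha>" using a by auto
  then show ?thesis unfolding Jb_def by (intro mult_pos_pos add_pos_pos) auto
qed

lemma energy_bound:
  assumes "0 < \<alpha>" "\<alpha> < 1" "R > 1" "0 < \<epsilon>" "\<epsilon> < 1"
  shows "G_energy \<alpha> R \<epsilon> \<le> ennreal (Cst \<alpha> R * \<epsilon> powr (1 - \<alpha>))"
proof -
  define K where "K = 4 * Jb \<alpha>"
  define p where "p = \<epsilon> powr (1 - \<alpha>)"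
  define T where "T = (\<lambda>y::real. if 1 \<le> \<bar>y\<bar> then \<bar>y\<bar> powr (-2) else 0)"
  define H where "H = (\<lambda>y. K\<^sup>2 * indicator {-(2*R)..2*R} y + 16 * R\<^sup>2 * T y)"
  have [measurable]: "T \<in> borel_measurable borel" unfolding T_def by measurable
  have [measurable]: "H \<in> borel_measurable borel" unfolding H_def by measurable
  have Kp: "0 < K" using Jb_pos[OF assms(1,2)] by (simp add: K_def)
  have p0: "0 \<le> p" "p \<le> 1" using assms by (auto simp: p_def intro: powr_le1)
  have T0: "0 \<le> T y" for y by (simp add: T_def)
  have pt: "(G_eps \<alpha> R \<epsilon> y)\<^sup>2 \<le> p * H y" for y
  proof (cases "\<bar>y\<bar> < 2 * R")
    case True
    have "\<bar>G_eps \<alpha> R \<epsilon> y\<bar> \<le> \<epsilon> powr (1-\<alpha>) * (3+\<epsilon>\<^sup>2) * Jb \<alpha>"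
      by (rule G_near) (use assms in auto)
    also have "\<dots> \<le> \<epsilon> powr (1-\<alpha>) * 4 * Jb \<alpha>"
    proof -
      have "\<epsilon>\<^sup>2 \<le> 1" using assms by (simp add: power_le_one)
      then show ?thesis using Jb_pos[OF assms(1,2)] by (intro mult_right_mono mult_left_mono) auto
    qed
    finally have g: "\<bar>G_eps \<alpha> R \<epsilon> y\<bar> \<le> p * K" by (simp add: p_def K_def)
    have "(G_eps \<alpha> R \<epsilon> y)\<^sup>2 = \<bar>G_eps \<alpha> R \<epsilon> y\<bar>\<^sup>2" by simp
    also have "\<dots> \<le> (p * K)\<^sup>2" using g by (intro power_mono) auto
    also have "\<dots> = p * (p * K\<^sup>2)" by (simp add: power2_eq_square)
    also have "\<dots> \<le> p * (1 * K\<^sup>2)" using p0 by (intro mult_left_mono mult_right_mono) auto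
    also have "\<dots> \<le> p * H y"
      using True p0 T0[of y] assms by (intro mult_left_mono) (auto simp: H_def indicator_def)
    finally show ?thesis .
  next
    case False
    have yp: "\<bar>y\<bar> \<ge> 1" "\<bar>y\<bar> > 0" using False assms by auto
    have "\<bar>G_eps \<alpha> R \<epsilon> y\<bar> \<le> 4 * R * \<epsilon> / \<bar>y\<bar>"
      by (rule G_far) (use assms False in auto)
    then have "(G_eps \<alpha> R \<epsilon> y)\<^sup>2 \<le> (4 * R * \<epsilon> / \<bar>y\<bar>)\<^sup>2"
      by (metis abs_ge_zero power2_abs power_mono)
    also have "\<dots> = 16 * R\<^sup>2 * \<epsilon>\<^sup>2 * \<bar>y\<bar> powr (-2)"
      using yp by (simp add: power2_eq_square powr_minus_divide powr_numeral field_simps)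
    also have "\<dots> \<le> 16 * R\<^sup>2 * p * \<bar>y\<bar> powr (-2)"
    proof -
      have "\<epsilon>\<^sup>2 \<le> \<epsilon>" using assms by (simp add: power2_eq_square mult_left_le_one_le)
      also have "\<epsilon> = \<epsilon> powr 1" using assms by simp
      also have "\<dots> \<le> p" unfolding p_def by (rule powr_mono') (use assms in auto)
      finally show ?thesis by (intro mult_right_mono mult_left_mono) auto
    qed
    also have "\<dots> = p * (16 * R\<^sup>2 * T y)" using yp by (simp add: T_def)
    also have "\<dots> \<le> p * H y" using p0 Kp by (intro mult_left_mono) (auto simp: H_def)
    finally show ?thesis .
  qed
  have "G_energy \<alpha> R \<epsilon> \<le> (\<integral>\<^sup>+y. ennreal p * ennreal (H y) \<partial>lborel)"
    unfolding G_energy_def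
  proof (rule nn_integral_mono)
    fix y
    have "ennreal ((G_eps \<alpha> R \<epsilon> y)\<^sup>2) \<le> ennreal (p * H y)" by (rule ennreal_leI[OF pt])
    also have "\<dots> = ennreal p * ennreal (H y)" by (rule ennreal_mult') (use p0 in auto)
    finally show "ennreal ((G_eps \<alpha> R \<epsilon> y)\<^sup>2) \<le> ennreal p * ennreal (H y)" .
  qed
  also have "\<dots> = ennreal p * (\<integral>\<^sup>+y. ennreal (H y) \<partial>lborel)"
    by (rule nn_integral_cmult) measurable
  also have "(\<integral>\<^sup>+y. ennreal (H y) \<partial>lborel) =
      (\<integral>\<^sup>+y. ennreal (K\<^sup>2) * indicator {-(2*R)..2*R} y + ennreal (16 * R\<^sup>2) * ennreal (T y) \<partial>lborel)"
  proof (rule nn_integral_cong)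
    fix y
    have "ennreal (H y) = ennreal (K\<^sup>2 * indicator {-(2*R)..2*R} y) + ennreal (16 * R\<^sup>2 * T y)"
      unfolding H_def by (rule ennreal_plus) (auto simp: T0)
    also have "\<dots> = ennreal (K\<^sup>2) * indicator {-(2*R)..2*R} y + ennreal (16 * R\<^sup>2) * ennreal (T y)"
      by (simp add: indicator_def ennreal_mult')
    finally show "ennreal (H y) = ennreal (K\<^sup>2) * indicator {-(2*R)..2*R} y + ennreal (16 * R\<^sup>2) * ennreal (T y)" .
  qed
  also have "\<dots> = ennreal (K\<^sup>2) * emeasure lborel {-(2*R)..2*R} + ennreal (16 * R\<^sup>2) * (\<integral>\<^sup>+y. ennreal (T y) \<partial>lborel)"
    by (subst nn_integral_add) (auto simp: nn_integral_cmult nn_integral_cmult_indicator)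
  also have "\<dots> \<le> ennreal (K\<^sup>2) * ennreal (4 * R) + ennreal (16 * R\<^sup>2) * 2"
  proof -
    have "emeasure lborel {-(2*R)..2*R} = ennreal (4 * R)" using assms by simp
    moreover have "(\<integral>\<^sup>+y. ennreal (T y) \<partial>lborel) \<le> 2" unfolding T_def by (rule T_bound)
    ultimately show ?thesis by (intro add_mono mult_left_mono) auto
  qed
  also have "\<dots> = ennreal (Cst \<alpha> R)"
  proof -
    have a: "ennreal (K\<^sup>2) * ennreal (4 * R) = ennreal (K\<^sup>2 * (4 * R))" by (rule ennreal_mult'[symmetric]) simp
    have b: "ennreal (16 * R\<^sup>2) * 2 = ennreal (16 * R\<^sup>2 * 2)" by (subst ennreal_mult') auto
    have c: "ennreal (K\<^sup>2 * (4 * R)) + ennreal (16 * R\<^sup>2 * 2) = ennreal (K\<^sup>2 * (4 * R) + 16 * R\<^sup>2 * 2)"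
      by (rule ennreal_plus[symmetric]) (use assms in auto)
    show ?thesis unfolding a b c by (simp add: Cst_def K_def)
  qed
  finally have "G_energy \<alpha> R \<epsilon> \<le> ennreal p * ennreal (Cst \<alpha> R)"
    by (simp add: mult_left_mono)
  also have "\<dots> = ennreal (Cst \<alpha> R * p)" using p0 by (simp add: ennreal_mult'[symmetric] mult.commute)
  finally show ?thesis by (simp add: p_def)
qed
lemma deriv_u_inner:
  assumes "\<epsilon> > 0" "\<bar>t\<bar> < R - 1"
  shows "deriv (u_eps R \<epsilon>) t = cos (t / \<epsilon>\<^sup>2)"
proof -
  have e: "\<epsilon>\<^sup>2 \<noteq> 0" using assms by simp
  have d0: "((\<lambda>s. \<epsilon>\<^sup>2 * sin (s / \<epsilon>\<^sup>2)) has_field_derivative \<epsilon>\<^sup>2 * (cos (t / \<epsilon>\<^sup>2) * (1 / \<epsilon>\<^sup>2))) (at t)"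
    by (intro DERIV_cmult DERIV_fun_sin DERIV_cdivide DERIV_ident)
  have d: "((\<lambda>s. \<epsilon>\<^sup>2 * sin (s / \<epsilon>\<^sup>2)) has_field_derivative cos (t / \<epsilon>\<^sup>2)) (at t)"
    using d0 e by simp
  have "(u_eps R \<epsilon> has_field_derivative cos (t / \<epsilon>\<^sup>2)) (at t)"
  proof (rule has_field_derivative_transform_within_open[OF d, of "{-(R-1)<..<R-1}"])
    show "open {-(R-1)<..<R-1}" by simp
    show "t \<in> {-(R-1)<..<R-1}" using assms by auto
    fix s assume "s \<in> {-(R-1)<..<R-1}"
    then have "cutoff R s = 1" by (auto simp: cutoff_def)
    then show "\<epsilon>\<^sup>2 * sin (s / \<epsilon>\<^sup>2) = u_eps R \<epsilon> s" by (simp add: u_eps_def)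
  qed
  then show ?thesis by (rule DERIV_imp_deriv)
qed

lemma cos_sq_integral:
  fixes \<epsilon> b :: real
  assumes "\<epsilon> > 0" "b \<ge> 0"
  shows "((\<lambda>t. (cos (t / \<epsilon>\<^sup>2))\<^sup>2) has_integral (b + \<epsilon>\<^sup>2 / 2 * sin (2 * b / \<epsilon>\<^sup>2))) {-b..b}"
proof -
  define F where "F = (\<lambda>t. t / 2 + \<epsilon>\<^sup>2 / 4 * sin (2 * t / \<epsilon>\<^sup>2))"
  have e: "\<epsilon>\<^sup>2 \<noteq> 0" using assms by simp
  have D: "(F has_real_derivative (cos (t / \<epsilon>\<^sup>2))\<^sup>2) (at t)" for t
  proof -
    have "(F has_real_derivative (1/2 + \<epsilon>\<^sup>2 / 4 * (cos (2 * t / \<epsilon>\<^sup>2) * ((2 * 1) / \<epsilon>\<^sup>2)))) (at t)"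
      unfolding F_def by (intro DERIV_add DERIV_cmult DERIV_fun_sin DERIV_cdivide DERIV_ident)
    moreover have "1/2 + \<epsilon>\<^sup>2 / 4 * (cos (2 * t / \<epsilon>\<^sup>2) * (2 / \<epsilon>\<^sup>2)) = (cos (t / \<epsilon>\<^sup>2))\<^sup>2"
    proof -
      have "cos (2 * t / \<epsilon>\<^sup>2) = cos (2 * (t / \<epsilon>\<^sup>2))" by simp
      also have "\<dots> = 2 * (cos (t / \<epsilon>\<^sup>2))\<^sup>2 - 1" by (rule cos_double_cos)
      finally show ?thesis using e by (simp add: field_simps)
    qed
    ultimately show ?thesis by simp
  qed
  have "((\<lambda>t. (cos (t / \<epsilon>\<^sup>2))\<^sup>2) has_integral (F b - F (-b))) {-b..b}"
    by (rule fundamental_theorem_of_calculus)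
       (use assms D in \<open>auto intro: has_field_derivative_at_within simp: has_real_derivative_iff_has_vector_derivative[symmetric]\<close>)
  moreover have "F b - F (-b) = b + \<epsilon>\<^sup>2 / 2 * sin (2 * b / \<epsilon>\<^sup>2)" by (simp add: F_def)
  ultimately show ?thesis by simp
qed

lemma deriv_energy_lower:
  assumes "R > 1" "\<epsilon> > 0" "\<epsilon>\<^sup>2 \<le> (R - 1) / 2"
  shows "ennreal ((R - 1) / 4) \<le> deriv_energy R \<epsilon>"
proof -
  define b where "b = (R - 1) / 2"
  have b0: "b > 0" using assms by (simp add: b_def)
  have "((\<lambda>t. (cos (t / \<epsilon>\<^sup>2))\<^sup>2) has_integral (b + \<epsilon>\<^sup>2 / 2 * sin (2 * b / \<epsilon>\<^sup>2))) {-b..b}"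
    by (rule cos_sq_integral) (use assms b0 in auto)
  then have I: "(\<integral>\<^sup>+t. ennreal ((cos (t / \<epsilon>\<^sup>2))\<^sup>2) * indicator {-b..b} t \<partial>lborel) = ennreal (b + \<epsilon>\<^sup>2 / 2 * sin (2 * b / \<epsilon>\<^sup>2))"
    by (rule nn_integral_has_integral_lebesgue'[rotated]) simp
  have "(R - 1) / 4 \<le> b + \<epsilon>\<^sup>2 / 2 * sin (2 * b / \<epsilon>\<^sup>2)"
  proof -
    have "- 1 \<le> sin (2 * b / \<epsilon>\<^sup>2)" by simp
    then have "\<epsilon>\<^sup>2 / 2 * (-1) \<le> \<epsilon>\<^sup>2 / 2 * sin (2 * b / \<epsilon>\<^sup>2)" by (intro mult_left_mono) auto
    then have "b + \<epsilon>\<^sup>2 / 2 * sin (2 * b / \<epsilon>\<^sup>2) \<ge> b - \<epsilon>\<^sup>2 / 2" by linarith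
    moreover have "\<epsilon>\<^sup>2 \<le> b" using assms by (simp add: b_def)
    ultimately show ?thesis unfolding b_def by linarith
  qed
  then have "ennreal ((R - 1) / 4) \<le> (\<integral>\<^sup>+t. ennreal ((cos (t / \<epsilon>\<^sup>2))\<^sup>2) * indicator {-b..b} t \<partial>lborel)"
    unfolding I by (rule ennreal_leI)
  also have "\<dots> \<le> deriv_energy R \<epsilon>"
    unfolding deriv_energy_def
  proof (rule nn_integral_mono)
    fix t
    show "ennreal ((cos (t / \<epsilon>\<^sup>2))\<^sup>2) * indicator {-b..b} t \<le> ennreal ((deriv (u_eps R \<epsilon>) t)\<^sup>2)"
    proof (cases "t \<in> {-b..b}")
      case True
      then have "-b \<le> t" "t \<le> b" by auto
      then have "\<bar>t\<bar> \<le> b" by arith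
      moreover have "b < R - 1" using assms(1) unfolding b_def by simp
      ultimately have "\<bar>t\<bar> < R - 1" by linarith
      then show ?thesis using True by (simp add: deriv_u_inner[OF assms(2)])
    qed simp
  qed
  finally show ?thesis .
qed
theorem mainTheorem3:
  fixes \<alpha> R :: real
  assumes "0 < \<alpha>" "\<alpha> < 1" "R > 1"
  shows "(\<forall>\<epsilon>>0. \<forall>y. integrable lborel (G_integrand \<alpha> R \<epsilon> y))
    \<and> (\<exists>C::real. \<forall>\<epsilon>. 0 < \<epsilon> \<and> \<epsilon> < 1 \<longrightarrow>
          G_energy \<alpha> R \<epsilon> \<le> ennreal (C * \<epsilon> powr (1 - \<alpha>)))
    \<and> ((G_energy \<alpha> R) \<longlongrightarrow> 0) (at_right 0)
    \<and> Liminf (at_right 0) (deriv_energy R) > 0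
    \<and> \<not> (\<exists>c::real. c > 0 \<and>
          (\<forall>\<^sub>F \<epsilon> in at_right 0. G_energy \<alpha> R \<epsilon> \<ge> ennreal c * deriv_energy R \<epsilon>))"
proof -
  have P1: "\<forall>\<epsilon>>0. \<forall>y. integrable lborel (G_integrand \<alpha> R \<epsilon> y)"
    using Gint_integrable assms by blast
  have P2: "\<forall>\<epsilon>. 0 < \<epsilon> \<and> \<epsilon> < 1 \<longrightarrow> G_energy \<alpha> R \<epsilon> \<le> ennreal (Cst \<alpha> R * \<epsilon> powr (1 - \<alpha>))"
    using energy_bound assms by blast
  have ev1: "\<forall>\<^sub>F \<epsilon> in at_right 0. 0 < \<epsilon> \<and> \<epsilon> < (1::real)"
    unfolding eventually_at_right_field by (intro exI[of _ 1]) auto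
  have lim_id: "((\<lambda>\<epsilon>::real. \<epsilon>) \<longlongrightarrow> 0) (at_right 0)" by (rule tendsto_ident_at)
  have lp: "((\<lambda>\<epsilon>::real. \<epsilon> powr (1 - \<alpha>)) \<longlongrightarrow> 0) (at_right 0)"
    by (rule tendsto_zero_powrI[OF lim_id tendsto_const])
       (use ev1 assms in \<open>auto elim: eventually_mono\<close>)
  have "((\<lambda>\<epsilon>::real. Cst \<alpha> R * \<epsilon> powr (1 - \<alpha>)) \<longlongrightarrow> 0) (at_right 0)"
    using tendsto_mult[OF tendsto_const[of "Cst \<alpha> R"] lp] by simp
  then have limh: "((\<lambda>\<epsilon>::real. ennreal (Cst \<alpha> R * \<epsilon> powr (1 - \<alpha>))) \<longlongrightarrow> 0) (at_right 0)"
    using tendsto_ennrealI by fastforce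
  have P3: "((G_energy \<alpha> R) \<longlongrightarrow> 0) (at_right 0)"
  proof (rule tendsto_sandwich[of "\<lambda>_. 0" _ _ "\<lambda>\<epsilon>. ennreal (Cst \<alpha> R * \<epsilon> powr (1 - \<alpha>))"])
    show "\<forall>\<^sub>F n in at_right 0. 0 \<le> G_energy \<alpha> R n" by simp
    show "\<forall>\<^sub>F n in at_right 0. G_energy \<alpha> R n \<le> ennreal (Cst \<alpha> R * n powr (1 - \<alpha>))"
      using ev1 by eventually_elim (use P2 in blast)
  qed (auto intro: limh)
  define m where "m = (R - 1) / 4"
  have mpos: "m > 0" using assms by (simp add: m_def)
  have evD: "\<forall>\<^sub>F \<epsilon> in at_right 0. ennreal m \<le> deriv_energy R \<epsilon>"
  proof -
    have "\<forall>\<^sub>F \<epsilon> in at_right 0. 0 < \<epsilon> \<and> \<epsilon> < min 1 ((R - 1) / 2)"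
      unfolding eventually_at_right_field using assms by (intro exI[of _ "min 1 ((R - 1) / 2)"]) auto
    then show ?thesis
    proof eventually_elim
      case (elim \<epsilon>)
      have "\<epsilon>\<^sup>2 \<le> \<epsilon>" using elim by (simp add: power2_eq_square mult_left_le_one_le)
      then have e2: "\<epsilon>\<^sup>2 \<le> (R - 1) / 2" using elim by linarith
      have e0: "0 < \<epsilon>" using elim by simp
      show ?case unfolding m_def by (rule deriv_energy_lower[OF assms(3) e0 e2])
    qed
  qed
  have P4: "Liminf (at_right 0) (deriv_energy R) > 0"
  proof -
    have "ennreal m \<le> Liminf (at_right 0) (deriv_energy R)" by (rule Liminf_bounded[OF evD])
    moreover have "0 < ennreal m" using mpos by simp
    ultimately show ?thesis by (rule order.strict_trans2[rotated])
  qed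
  have P5: "\<not> (\<exists>c::real. c > 0 \<and>
          (\<forall>\<^sub>F \<epsilon> in at_right 0. G_energy \<alpha> R \<epsilon> \<ge> ennreal c * deriv_energy R \<epsilon>))"
  proof
    assume "\<exists>c::real. c > 0 \<and> (\<forall>\<^sub>F \<epsilon> in at_right 0. G_energy \<alpha> R \<epsilon> \<ge> ennreal c * deriv_energy R \<epsilon>)"
    then obtain c :: real where c: "c > 0" and evc: "\<forall>\<^sub>F \<epsilon> in at_right 0. G_energy \<alpha> R \<epsilon> \<ge> ennreal c * deriv_energy R \<epsilon>"
      by blast
    have pos: "0 < ennreal c * ennreal m" using c mpos by (simp add: ennreal_mult'[symmetric])
    have "\<forall>\<^sub>F \<epsilon> in at_right 0. G_energy \<alpha> R \<epsilon> < ennreal c * ennreal m"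
      by (rule order_tendstoD(2)[OF P3 pos])
    with evc evD have "\<forall>\<^sub>F \<epsilon> in at_right (0::real). False"
    proof eventually_elim
      case (elim \<epsilon>)
      have "ennreal c * ennreal m \<le> ennreal c * deriv_energy R \<epsilon>" by (rule mult_left_mono) (use elim in auto)
      also have "\<dots> \<le> G_energy \<alpha> R \<epsilon>" using elim by simp
      finally show False using elim by simp
    qed
    then show False by (simp add: trivial_limit_at_right_real)
  qed
  show ?thesis using P1 P2 P3 P4 P5 by blast
qed

end
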